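(* Consider the multicast coalitional game with player set $\mathcal{N}=\{1,\ldots,N\}$, $N\ge2$, and value function $$v(S)=\sum_{i\in S}U_i-\sum_{i\in S}\frac{\alpha_i}{R_S}-\frac{\beta+\gamma}{R_S},\qquad R_S=\min_{i\in S}R_i,$$ for nonempty $S\subseteq\mathcal{N}$. Suppose $P_{Rx,i}=P_{Rx}$ for all $i$, so that $\alpha_i=\alpha:=aP_{Rx}X$ for all $i$. Let $k\in\arg\min_{i\in\mathcal{N}}R_i$ and $j\in\arg\min_{i\in\mathcal{N}\setminus\{k\}}R_i$, and write $R_j=\lambda R_k$ with $\lambda\ge1$ (so $R_k$ and $R_j$ are the minimum and second minimum rates). If $$\lambda>1+\frac{\beta+\gamma}{\alpha(N-1)},$$ then the core is empty.
   Context: A transmitter multicasts a file of size $X>0$ bits to users $\mathcal{N}=\{1,\dots,N\}$. User $i$ has valuation $U_i\in\mathbb{R}$, downloads at rate $R_i>0$, and consumes receive power $P_{Rx,i}>0$; the transmitter transmits at power $P_{Tx}>0$. Costs per unit energy are $a>0$ at users and $b>0$ at the transmitter; bandwidth cost per second is $w>0$. Set $\alpha_i=aP_{Rx,i}X$, $\beta=bP_{Tx}X$, $\gamma=wX$. The core is the set of payoff vectors $(x_1,\dots,x_N)\in\mathbb{R}^N$ with $\sum_{i\in\mathcal{N}}x_i=v(\mathcal{N})$ and $\sum_{i\in S}x_i\ge v(S)$ for every nonempty $S\subseteq\mathcal{N}$. *)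

theory Defs
  imports "HOL-Analysis.Analysis"
begin

definition rate_min :: "(nat \<Rightarrow> real) \<Rightarrow> nat set \<Rightarrow> real" where
  "rate_min R S = Min (R ` S)"

text \<open>Value of a nonempty coalition S in the multicast game
  (alpha i = a P_Rx,i X, beta = b P_Tx X, gamma = w X).\<close>
definition mc_value ::
  "(nat \<Rightarrow> real) \<Rightarrow> (nat \<Rightarrow> real) \<Rightarrow> (nat \<Rightarrow> real) \<Rightarrow> real \<Rightarrow> real \<Rightarrow> nat set \<Rightarrow> real" where
  "mc_value U R \<alpha> \<beta> \<gamma> S =
     (\<Sum>i\<in>S. U i) - (\<Sum>i\<in>S. \<alpha> i / rate_min R S) - (\<beta> + \<gamma>) / rate_min R S"

text \<open>Core of a game with player set Nset and value function v;
  payoff vectors are functions on the players (values outside Nset irrelevant).\<close>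
definition core :: "nat set \<Rightarrow> (nat set \<Rightarrow> real) \<Rightarrow> (nat \<Rightarrow> real) set" where
  "core Nset v = {x. (\<Sum>i\<in>Nset. x i) = v Nset \<and>
      (\<forall>S. S \<subseteq> Nset \<and> S \<noteq> {} \<longrightarrow> (\<Sum>i\<in>S. x i) \<ge> v S)}"

end

theory Submission
  imports Defs
begin

theorem theorem5:
  fixes N :: nat and U R PRx :: "nat \<Rightarrow> real"
    and X a b w PTx P :: real and k j :: nat
  assumes N2: "N \<ge> 2"
    and X: "X > 0" and a: "a > 0" and b: "b > 0" and w: "w > 0" and PTx: "PTx > 0"
    and Rpos: "\<forall>i\<in>{1..N}. R i > 0"
    and PRx_pos: "\<forall>i\<in>{1..N}. PRx i > 0"
    and PRx_eq: "\<forall>i\<in>{1..N}. PRx i = P"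
    and k: "k \<in> {1..N}" "\<forall>i\<in>{1..N}. R k \<le> R i"
    and j: "j \<in> {1..N} - {k}" "\<forall>i\<in>{1..N} - {k}. R j \<le> R i"
    and lam: "R j / R k > 1 + (b * PTx * X + w * X) / ((a * P * X) * (real N - 1))"
  shows "core {1..N} (mc_value U R (\<lambda>i. a * PRx i * X) (b * PTx * X) (w * X)) = {}"
proof (rule ccontr)
  define v where "v = mc_value U R (\<lambda>i. a * PRx i * X) (b * PTx * X) (w * X)"
  define al where "al = a * P * X"
  define c where "c = b * PTx * X + w * X"
  define A where "A = {1..N}"
  define B where "B = A - {k}"
  assume "core {1..N} (mc_value U R (\<lambda>i. a * PRx i * X) (b * PTx * X) (w * X)) \<noteq> {}"
  then obtain x where x: "x \<in> core A v" unfolding v_def A_def by blast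
  have P: "P > 0" using PRx_pos PRx_eq k by auto
  have alp: "al > 0" unfolding al_def using a P X by simp
  have cp: "c > 0" unfolding c_def using b PTx X w by (simp add: add_pos_pos)
  have Rk: "R k > 0" using Rpos k by auto
  have Rj: "R j > 0" using Rpos j by auto
  have kA: "k \<in> A" using k A_def by simp
  have finA: "finite A" "finite B" unfolding A_def B_def by auto
  have cardA: "card A = N" unfolding A_def by simp
  have cardB: "real (card B) = real N - 1" unfolding B_def using kA cardA finA N2
    by (simp add: of_nat_diff)
  have rA: "rate_min R A = R k" unfolding rate_min_def
    using k finA kA A_def by (intro Min_eqI) auto
  have rB: "rate_min R B = R j" unfolding rate_min_def
    using j finA B_def A_def by (intro Min_eqI) auto
  have rK: "rate_min R {k} = R k" unfolding rate_min_def by simp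
  have alA: "\<forall>i\<in>A. a * PRx i * X = al" using PRx_eq al_def A_def by auto
  have vA: "v A = sum U A - real N * (al / R k) - c / R k"
    unfolding v_def mc_value_def rA c_def using alA cardA by simp
  have vB: "v B = sum U B - (real N - 1) * (al / R j) - c / R j"
    unfolding v_def mc_value_def rB c_def using alA cardB B_def by simp
  have vK: "v {k} = U k - al / R k - c / R k"
    unfolding v_def mc_value_def rK c_def using alA kA by simp
  have xc: "sum x A = v A" "\<And>S. S \<subseteq> A \<Longrightarrow> S \<noteq> {} \<Longrightarrow> sum x S \<ge> v S"
    using x unfolding core_def by auto
  have sA: "sum x A = v A" using xc(1) .
  have Bne: "B \<noteq> {}" using j B_def A_def by auto
  have sB: "sum x B \<ge> v B" using xc(2)[of B] Bne B_def by auto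
  have sK: "x k \<ge> v {k}" using xc(2)[of "{k}"] kA by simp
  have splitx: "sum x A = x k + sum x B" unfolding B_def using finA kA
    by (simp add: sum.remove)
  have splitU: "sum U A = U k + sum U B" unfolding B_def using finA kA
    by (simp add: sum.remove)
  have ineq: "(real N - 1) * al / R k \<le> ((real N - 1) * al + c) / R j"
  proof -
    have "x k \<le> v A - v B" using sA sB splitx by linarith
    hence "U k - al / R k - c / R k \<le> v A - v B" using sK vK by linarith
    hence h: "real N * (al / R k) \<le> al / R k + c / R j + (real N - 1) * (al / R j)"
      using vA vB splitU by linarith
    have e1: "(real N - 1) * al / R k = real N * (al / R k) - al / R k"
      by (simp add: algebra_simps diff_divide_distrib)
    have e2: "((real N - 1) * al + c) / R j = c / R j + (real N - 1) * (al / R j)"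
      by (simp add: add_divide_distrib)
    show ?thesis using h e1 e2 by linarith
  qed
  have N1: "real N - 1 > 0" using N2 by simp
  have "R j / R k > 1 + c / (al * (real N - 1))" using lam unfolding c_def al_def .
  hence "R j / R k * (al * (real N - 1)) > (1 + c / (al * (real N - 1))) * (al * (real N - 1))"
    using alp N1 by (intro mult_strict_right_mono) auto
  define M where "M = al * (real N - 1)"
  have Mp: "M > 0" unfolding M_def using alp N1 by simp
  have e3: "(1 + c / M) * M = M + c" using Mp by (simp add: distrib_right)
  have l2: "R j / R k * M > M + c"
    using \<open>R j / R k * (al * (real N - 1)) > (1 + c / (al * (real N - 1))) * (al * (real N - 1))\<close>
      e3 unfolding M_def by simp
  have e4: "R j / R k * M * R k = R j * M" using Rk by simp
  have g: "R j * M > R k * (M + c)"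
    using mult_strict_right_mono[OF l2 Rk] e4 by (simp add: mult.commute)
  from ineq have "(real N - 1) * al * R j \<le> ((real N - 1) * al + c) * R k"
    using Rk Rj by (simp add: field_simps)
  with g show False unfolding M_def by (simp add: algebra_simps)
qed

end
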